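(* Let $1<p<\infty$ and let $u,v$ be weights. Suppose that for each $A\subseteq\{a_1,\dots,a_k\}$ there is a constant $C$ with $$\Vert u\,w^A\,\widetilde S_n^A([v\,w^A]^{-1}f)\Vert_{L^p(d\mu^A)}\le C\Vert f\Vert_{L^p(d\mu^A)}\quad\text{for all }n\ge0,\ f\in L^p(d\mu^A).$$ Then there exists a constant $C$ such that $\Vert u\,T_n(v^{-1}f)\Vert_{L^p(d\mu)}\le C\Vert f\Vert_{L^p(d\mu)}$ for all $n\ge0$ and $f\in L^p(d\mu)$.
   Context: Let $\mu$ be a positive Borel measure on $\mathbb R$ with infinitely many points of increase and all moments finite. Let $a_1,\dots,a_k\in\mathbb R$ be distinct with $\mu(\{a_i\})=0$, $M_i>0$, $\nu=\mu+\sum_{i=1}^kM_i\delta_{a_i}$. $L_n(x,y)=\sum_{j=0}^nP_j(x)P_j(y)$ with $(P_j)$ the orthonormal polynomials for $\nu$, and $T_nf(x)=\int L_n(x,y)f(y)\,d\mu(y)$. For $A\subseteq\{a_1,\dots,a_k\}$: $d\mu^A(x)=\prod_{a_i\in A}(x-a_i)^2\,d\mu(x)$; $\widetilde S_n^A$ is the $n$-th partial sum operator of the orthonormal polynomial expansion with respect to $\mu^A$, i.e. $\widetilde S_n^Ag(x)=\int K_n^A(x,y)g(y)\,d\mu^A(y)$ with $K_n^A$ the $n$-th kernel of $\mu^A$ (and $\widetilde S_m^A=0$ for $m<0$); $w^A(x)=\prod_{a_i\in A}|x-a_i|^{1-2/p}$. A weight is a non-negative measurable function. *)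

theory Defs
  imports "HOL-Analysis.Analysis" "HOL-Computational_Algebra.Polynomial"
begin

definition point_of_increase :: "real measure \<Rightarrow> real \<Rightarrow> bool" where
  "point_of_increase \<mu> x \<longleftrightarrow> (\<forall>e>0. emeasure \<mu> {x - e<..<x + e} > 0)"

definition nu_measure :: "real measure \<Rightarrow> (nat \<Rightarrow> real) \<Rightarrow> (nat \<Rightarrow> real) \<Rightarrow> nat \<Rightarrow> real measure" where
  "nu_measure \<mu> a M k = measure_of UNIV (sets borel)
     (\<lambda>S. emeasure \<mu> S + (\<Sum>i<k. ennreal (M i) * indicator S (a i)))"

definition muA :: "real measure \<Rightarrow> (nat \<Rightarrow> real) \<Rightarrow> nat set \<Rightarrow> real measure" where
  "muA \<mu> a A = density \<mu> (\<lambda>x. ennreal (\<Prod>i\<in>A. (x - a i)^2))"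

definition orthonormal_polys :: "real measure \<Rightarrow> (nat \<Rightarrow> real poly) \<Rightarrow> bool" where
  "orthonormal_polys N P \<longleftrightarrow>
     (\<forall>j. degree (P j) = j \<and> lead_coeff (P j) > 0) \<and>
     (\<forall>i j. (\<integral>x. poly (P i) x * poly (P j) x \<partial>N) = (if i = j then 1 else 0))"

definition onpolys :: "real measure \<Rightarrow> nat \<Rightarrow> real poly" where
  "onpolys N = (SOME P. orthonormal_polys N P)"

definition opkernel :: "real measure \<Rightarrow> nat \<Rightarrow> real \<Rightarrow> real \<Rightarrow> real" where
  "opkernel N n x y = (\<Sum>j\<le>n. poly (onpolys N j) x * poly (onpolys N j) y)"

definition Lp_norm :: "real measure \<Rightarrow> real \<Rightarrow> (real \<Rightarrow> real) \<Rightarrow> ennreal" where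
  "Lp_norm N p f =
     (let I = (\<integral>\<^sup>+ x. ennreal (\<bar>f x\<bar> powr p) \<partial>N)
      in if I = \<infinity> then \<infinity> else ennreal (enn2real I powr (1 / p)))"

definition in_Lp :: "real measure \<Rightarrow> real \<Rightarrow> (real \<Rightarrow> real) \<Rightarrow> bool" where
  "in_Lp N p f \<longleftrightarrow> f \<in> borel_measurable N \<and> (\<integral>\<^sup>+ x. ennreal (\<bar>f x\<bar> powr p) \<partial>N) < \<infinity>"

definition T_op :: "real measure \<Rightarrow> (nat \<Rightarrow> real) \<Rightarrow> (nat \<Rightarrow> real) \<Rightarrow> nat \<Rightarrow> nat
    \<Rightarrow> (real \<Rightarrow> real) \<Rightarrow> real \<Rightarrow> real" where
  "T_op \<mu> a M k n f x = (\<integral>y. opkernel (nu_measure \<mu> a M k) n x y * f y \<partial>\<mu>)"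

definition S_opA :: "real measure \<Rightarrow> (nat \<Rightarrow> real) \<Rightarrow> nat set \<Rightarrow> nat
    \<Rightarrow> (real \<Rightarrow> real) \<Rightarrow> real \<Rightarrow> real" where
  "S_opA \<mu> a A n g x = (\<integral>y. opkernel (muA \<mu> a A) n x y * g y \<partial>(muA \<mu> a A))"

definition wA :: "(nat \<Rightarrow> real) \<Rightarrow> nat set \<Rightarrow> real \<Rightarrow> real \<Rightarrow> real" where
  "wA a A p x = (\<Prod>i\<in>A. \<bar>x - a i\<bar> powr (1 - 2 / p))"

end

theory Submission
  imports Defs
begin


definition mom :: "real measure \<Rightarrow> (real \<Rightarrow> real) \<Rightarrow> bool" where
  "mom N h \<longleftrightarrow> (\<forall>j::nat. integrable N (\<lambda>x. x ^ j * h x))"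

lemma mom_poly: assumes "mom N h" shows "integrable N (\<lambda>x. poly q x * h x)"
proof -
  have "(\<lambda>x. poly q x * h x) = (\<lambda>x. \<Sum>i\<le>degree q. coeff q i * (x^i * h x))"
    by (auto simp: poly_altdef sum_distrib_right mult.assoc)
  then show ?thesis using assms unfolding mom_def by (auto intro!: integrable_sum)
qed

lemma mom_mult_poly: assumes "mom N h" shows "mom N (\<lambda>x. poly r x * h x)"
  unfolding mom_def
proof
  fix j
  show "integrable N (\<lambda>x. x ^ j * (poly r x * h x))"
    using mom_poly[OF assms, of "monom 1 j * r"] by (simp add: poly_monom mult.assoc)
qed

lemma int_poly_add: assumes "mom N h"
  shows "(\<integral>x. poly (p + q) x * h x \<partial>N) = (\<integral>x. poly p x * h x \<partial>N) + (\<integral>x. poly q x * h x \<partial>N)"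
  using mom_poly[OF assms, of p] mom_poly[OF assms, of q]
  by (simp add: distrib_right)

lemma int_poly_diff: assumes "mom N h"
  shows "(\<integral>x. poly (p - q) x * h x \<partial>N) = (\<integral>x. poly p x * h x \<partial>N) - (\<integral>x. poly q x * h x \<partial>N)"
  using mom_poly[OF assms, of p] mom_poly[OF assms, of q]
  by (simp add: left_diff_distrib)

lemma int_poly_smult:
  fixes h :: "real \<Rightarrow> real"
  shows "(\<integral>x. poly (smult c p) x * h x \<partial>N) = c * (\<integral>x. poly p x * h x \<partial>N)"
  by (simp add: mult.assoc)

lemma int_poly_sum: assumes "mom N h"
  shows "(\<integral>x. poly (\<Sum>j\<in>S. f j) x * h x \<partial>N) = (\<Sum>j\<in>S. \<integral>x. poly (f j) x * h x \<partial>N)"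
proof (cases "finite S")
  case True
  have "(\<lambda>x. poly (\<Sum>j\<in>S. f j) x * h x) = (\<lambda>x. \<Sum>j\<in>S. poly (f j) x * h x)"
    by (auto simp: poly_sum sum_distrib_right)
  then show ?thesis using mom_poly[OF assms] by (simp add: integral_sum)
qed simp

definition ip :: "real measure \<Rightarrow> real poly \<Rightarrow> real poly \<Rightarrow> real" where
  "ip N p q = (\<integral>x. poly p x * poly q x \<partial>N)"

lemma ip_sym: "ip N p q = ip N q p"
  unfolding ip_def by (simp add: mult.commute)

lemma mom1_poly: "mom N (\<lambda>_. 1) \<Longrightarrow> mom N (poly q)"
  using mom_mult_poly[of N "\<lambda>_. 1" q] by simp

lemma ip_add1: "mom N (\<lambda>_. 1) \<Longrightarrow> ip N (p + q) r = ip N p r + ip N q r"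
  unfolding ip_def by (rule int_poly_add[OF mom1_poly])
lemma ip_diff1: "mom N (\<lambda>_. 1) \<Longrightarrow> ip N (p - q) r = ip N p r - ip N q r"
  unfolding ip_def by (rule int_poly_diff[OF mom1_poly])
lemma ip_smult1: "ip N (smult c p) r = c * ip N p r"
  unfolding ip_def by (rule int_poly_smult)
lemma ip_sum1: "mom N (\<lambda>_. 1) \<Longrightarrow> ip N (\<Sum>j\<in>S. f j) r = (\<Sum>j\<in>S. ip N (f j) r)"
  unfolding ip_def by (rule int_poly_sum[OF mom1_poly])
lemma ip_add2: "mom N (\<lambda>_. 1) \<Longrightarrow> ip N r (p + q) = ip N r p + ip N r q"
  using ip_add1 ip_sym by metis
lemma ip_diff2: "mom N (\<lambda>_. 1) \<Longrightarrow> ip N r (p - q) = ip N r p - ip N r q"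
  using ip_diff1 ip_sym by metis
lemma ip_smult2: "ip N r (smult c p) = c * ip N r p"
  using ip_smult1 ip_sym by metis
lemma ip_sum2: "mom N (\<lambda>_. 1) \<Longrightarrow> ip N r (\<Sum>j\<in>S. f j) = (\<Sum>j\<in>S. ip N r (f j))"
  using ip_sum1[of N f S r] ip_sym by (metis (no_types, lifting) sum.cong)

definition posdef :: "real measure \<Rightarrow> bool" where
  "posdef N \<longleftrightarrow> (\<forall>q. q \<noteq> 0 \<longrightarrow> ip N q q > 0)"

definition props :: "real measure \<Rightarrow> real poly list \<Rightarrow> bool" where
  "props N ps \<longleftrightarrow> (\<forall>j<length ps. degree (ps!j) = j \<and> lead_coeff (ps!j) > 0) \<and>
     (\<forall>i<length ps. \<forall>j<length ps. ip N (ps!i) (ps!j) = (if i = j then 1 else 0))"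

lemma props_extend:
  assumes m: "mom N (\<lambda>_. 1)" and pd: "posdef N" and ps: "props N ps"
  shows "\<exists>p. props N (ps @ [p])"
proof -
  define n where "n = length ps"
  define c where "c j = ip N (monom 1 n) (ps!j)" for j
  define q where "q = monom 1 n - (\<Sum>j<n. smult (c j) (ps!j))"
  have dj: "degree (ps!j) = j" if "j < n" for j using ps that unfolding props_def n_def by auto
  have dsum: "degree (\<Sum>j<n. smult (c j) (ps!j)) < n \<or> (\<Sum>j<n. smult (c j) (ps!j)) = 0"
  proof (cases n)
    case 0 then show ?thesis by simp
  next
    case (Suc m)
    have "degree (\<Sum>j<n. smult (c j) (ps!j)) \<le> m"
      by (rule degree_sum_le) (use dj Suc in \<open>auto intro: order.trans[OF degree_smult_le]\<close>)
    then show ?thesis using Suc by auto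
  qed
  have cq: "coeff q n = 1"
    using dsum unfolding q_def by (auto simp: coeff_eq_0)
  have dq: "degree q = n"
  proof -
    have "degree q \<le> n" unfolding q_def
      using dsum by (auto intro!: order.trans[OF degree_diff_le] simp: degree_monom_eq)
    moreover have "coeff q n \<noteq> 0" using cq by simp
    ultimately show ?thesis using le_degree le_antisym by blast
  qed
  have q0: "q \<noteq> 0" using cq by auto
  have orth: "ip N q (ps!i) = 0" if "i < n" for i
  proof -
    have "ip N q (ps!i) = c i - (\<Sum>j<n. c j * ip N (ps!j) (ps!i))"
      unfolding q_def using m by (simp add: ip_diff1 ip_sum1 ip_smult1 c_def)
    also have "(\<Sum>j<n. c j * ip N (ps!j) (ps!i)) = (\<Sum>j<n. if j = i then c j else 0)"
      using ps that unfolding props_def n_def by (intro sum.cong) auto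
    also have "\<dots> = c i" using that by simp
    finally show ?thesis by simp
  qed
  define s where "s = ip N q q"
  have s: "s > 0" using pd q0 unfolding posdef_def s_def by auto
  define p where "p = smult (1 / sqrt s) q"
  have "props N (ps @ [p])"
    unfolding props_def
  proof (rule conjI; intro allI impI)
    fix j assume "j < length (ps @ [p])"
    then have "j < n \<or> j = n" by (auto simp: n_def)
    then show "degree ((ps @ [p]) ! j) = j \<and> lead_coeff ((ps @ [p]) ! j) > 0"
    proof
      assume "j < n" then show ?thesis using ps unfolding props_def n_def by (auto simp: nth_append)
    next
      assume "j = n" then show ?thesis using s dq cq by (auto simp: nth_append p_def n_def)
    qed
  next
    fix i j assume i: "i < length (ps @ [p])" and j: "j < length (ps @ [p])"
    have pp: "ip N p p = 1" using s by (simp add: p_def ip_smult1 ip_smult2 s_def[symmetric])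
    have pi: "ip N p (ps!i) = 0" if "i < n" for i using orth[OF that] by (simp add: p_def ip_smult1)
    have ip': "ip N (ps!i) p = 0" if "i < n" for i using pi[OF that] ip_sym[of N p] by simp
    from i j have "(i < n \<or> i = n) \<and> (j < n \<or> j = n)" by (auto simp: n_def)
    then show "ip N ((ps @ [p]) ! i) ((ps @ [p]) ! j) = (if i = j then 1 else 0)"
      using ps pp pi ip' unfolding props_def n_def
      by (auto simp: nth_append)
  qed
  then show ?thesis by blast
qed

primrec seqp :: "real measure \<Rightarrow> nat \<Rightarrow> real poly list" where
  "seqp N 0 = []"
| "seqp N (Suc n) = seqp N n @ [SOME p. props N (seqp N n @ [p])]"

lemma seqp_len: "length (seqp N n) = n" by (induct n) auto

lemma seqp_props: assumes "mom N (\<lambda>_. 1)" "posdef N" shows "props N (seqp N n)"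
proof (induct n)
  case 0 then show ?case by (simp add: props_def)
next
  case (Suc n) then show ?case using someI_ex[OF props_extend[OF assms Suc]] by simp
qed

lemma seqp_prefix: "j < n \<Longrightarrow> n \<le> m \<Longrightarrow> seqp N m ! j = seqp N n ! j"
proof (induct m)
  case 0 then show ?case by simp
next
  case (Suc m)
  show ?case
  proof (cases "n = Suc m")
    case False then have "n \<le> m" using Suc by simp
    then show ?thesis using Suc by (simp add: nth_append seqp_len)
  qed simp
qed

lemma orthonormal_exists:
  assumes "mom N (\<lambda>_. 1)" "posdef N" shows "\<exists>P. orthonormal_polys N P"
proof
  define P where "P j = seqp N (Suc j) ! j" for j
  have PP: "P j = seqp N m ! j" if "j < m" for j m
    unfolding P_def using seqp_prefix[of j "Suc j" m] that by simp
  show "orthonormal_polys N P"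
    unfolding orthonormal_polys_def
  proof (rule conjI; intro allI)
    fix j
    show "degree (P j) = j \<and> 0 < lead_coeff (P j)"
      using seqp_props[OF assms, of "Suc j"] unfolding props_def P_def by (auto simp: seqp_len)
  next
    fix i j
    have "P i = seqp N (Suc (max i j)) ! i" "P j = seqp N (Suc (max i j)) ! j"
      by (rule PP, simp)+
    then show "(\<integral>x. poly (P i) x * poly (P j) x \<partial>N) = (if i = j then 1 else 0)"
      using seqp_props[OF assms, of "Suc (max i j)"] unfolding props_def ip_def
      by (auto simp: seqp_len less_Suc_eq_le)
  qed
qed

lemma onpolys_on: assumes "mom N (\<lambda>_. 1)" "posdef N" shows "orthonormal_polys N (onpolys N)"
  unfolding onpolys_def using orthonormal_exists[OF assms] by (rule someI_ex)



lemma on_deg: "orthonormal_polys N P \<Longrightarrow> degree (P j) = j"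
  unfolding orthonormal_polys_def by auto
lemma on_lc: "orthonormal_polys N P \<Longrightarrow> lead_coeff (P j) > 0"
  unfolding orthonormal_polys_def by blast
lemma on_ip: "orthonormal_polys N P \<Longrightarrow> ip N (P i) (P j) = (if i = j then 1 else 0)"
  unfolding orthonormal_polys_def ip_def by auto

lemma span_ex:
  assumes on: "orthonormal_polys N P"
  shows "degree q \<le> n \<Longrightarrow> \<exists>c. q = (\<Sum>j\<le>n. smult (c j) (P j))"
proof (induct n arbitrary: q)
  case 0
  then have dq: "degree q = 0" by simp
  have d0: "degree (P 0) = 0" using on_deg[OF on] by simp
  have l0: "coeff (P 0) 0 \<noteq> 0" using on_lc[OF on, of 0] d0 by simp
  have "q = smult (coeff q 0 / coeff (P 0) 0) (P 0)"
    using degree_0_id[OF dq] degree_0_id[OF d0] l0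
    by (metis (no_types, lifting) divide_eq_0_iff nonzero_mult_div_cancel_right smult_pCons smult_pCons smult_0_right mult.commute times_divide_eq_left div_0 pCons_0_0 dq d0)
  then show ?case by (intro exI[of _ "\<lambda>_. coeff q 0 / coeff (P 0) 0"]) simp
next
  case (Suc n)
  define d where "d = coeff q (Suc n) / lead_coeff (P (Suc n))"
  define r where "r = q - smult d (P (Suc n))"
  have dP: "degree (P (Suc n)) = Suc n" using on_deg[OF on] by simp
  have lP: "lead_coeff (P (Suc n)) \<noteq> 0" using on_lc[OF on, of "Suc n"] by linarith
  have "degree r \<le> Suc n" unfolding r_def using Suc.prems dP
    by (intro degree_diff_le) (auto intro: order.trans[OF degree_smult_le])
  moreover have "coeff r (Suc n) = 0" unfolding r_def d_def using lP dP by simp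
  ultimately have "degree r \<le> n"
  proof (rule_tac ccontr)
    assume a: "degree r \<le> Suc n" "coeff r (Suc n) = 0" "\<not> degree r \<le> n"
    then have "degree r = Suc n" by simp
    then have "r = 0" using a(2) by (metis leading_coeff_0_iff)
    then show False using a(3) by simp
  qed
  from Suc.hyps[OF this] obtain c where c: "r = (\<Sum>j\<le>n. smult (c j) (P j))" by blast
  define c' where "c' = c(Suc n := d)"
  have "(\<Sum>j\<le>Suc n. smult (c' j) (P j)) = (\<Sum>j\<le>n. smult (c j) (P j)) + smult d (P (Suc n))"
    unfolding c'_def by (simp add: sum.atMost_Suc)
  also have "\<dots> = q" using c unfolding r_def by simp
  finally show ?case by metis
qed

lemma expand:
  assumes on: "orthonormal_polys N P" and m: "mom N (\<lambda>_. 1)" and dq: "degree q \<le> n"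
  shows "q = (\<Sum>j\<le>n. smult (ip N q (P j)) (P j))"
proof -
  obtain c where c: "q = (\<Sum>j\<le>n. smult (c j) (P j))" using span_ex[OF on dq] by blast
  have "ip N q (P i) = c i" if "i \<le> n" for i
  proof -
    have "ip N q (P i) = (\<Sum>j\<le>n. c j * ip N (P j) (P i))"
      by (subst c) (simp add: ip_sum1[OF m] ip_smult1)
    also have "\<dots> = (\<Sum>j\<le>n. if j = i then c j else 0)"
      using on_ip[OF on] by (intro sum.cong) auto
    also have "\<dots> = c i" using that by simp
    finally show ?thesis .
  qed
  then have "(\<Sum>j\<le>n. smult (ip N q (P j)) (P j)) = (\<Sum>j\<le>n. smult (c j) (P j))"
    by (intro sum.cong) auto
  then show ?thesis using c by simp
qed

lemma reproduce:
  assumes on: "orthonormal_polys N P" and m: "mom N (\<lambda>_. 1)" and dq: "degree q \<le> n"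
  shows "poly q x = (\<Sum>j\<le>n. ip N q (P j) * poly (P j) x)"
  by (subst expand[OF on m dq]) (simp add: poly_sum)

definition Op :: "real measure \<Rightarrow> real measure \<Rightarrow> nat \<Rightarrow> (real \<Rightarrow> real) \<Rightarrow> real \<Rightarrow> real" where
  "Op N \<mu> n g x = (\<Sum>j\<le>n. poly (onpolys N j) x * (\<integral>y. poly (onpolys N j) y * g y \<partial>\<mu>))"

definition Opoly :: "real measure \<Rightarrow> real measure \<Rightarrow> nat \<Rightarrow> (real \<Rightarrow> real) \<Rightarrow> real poly" where
  "Opoly N \<mu> n g = (\<Sum>j\<le>n. smult (\<integral>y. poly (onpolys N j) y * g y \<partial>\<mu>) (onpolys N j))"

lemma Opoly_poly: "poly (Opoly N \<mu> n g) x = Op N \<mu> n g x"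
  unfolding Opoly_def Op_def by (simp add: poly_sum mult.commute)

lemma Opoly_deg: assumes on: "orthonormal_polys N (onpolys N)" shows "degree (Opoly N \<mu> n g) \<le> n"
  unfolding Opoly_def
  by (rule degree_sum_le) (auto intro: order.trans[OF degree_smult_le] simp: on_deg[OF on])

lemma kernel_int:
  assumes g: "mom \<mu> g"
  shows "(\<integral>y. opkernel N n x y * g y \<partial>\<mu>) = Op N \<mu> n g x"
    "integrable \<mu> (\<lambda>y. opkernel N n x y * g y)"
proof -
  have eq: "(\<lambda>y. opkernel N n x y * g y) = (\<lambda>y. \<Sum>j\<le>n. poly (onpolys N j) x * (poly (onpolys N j) y * g y))"
    unfolding opkernel_def by (simp add: sum_distrib_right mult.assoc)
  show "(\<integral>y. opkernel N n x y * g y \<partial>\<mu>) = Op N \<mu> n g x"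
    unfolding eq Op_def using mom_poly[OF g] by (simp add: integral_sum)
  show "integrable \<mu> (\<lambda>y. opkernel N n x y * g y)"
    unfolding eq using mom_poly[OF g] by auto
qed

lemma Op_orth:
  assumes on: "orthonormal_polys N (onpolys N)" and m: "mom N (\<lambda>_. 1)" and g: "mom \<mu> g"
    and dq: "degree q \<le> n"
  shows "(\<integral>y. poly q y * g y \<partial>\<mu>) = ip N q (Opoly N \<mu> n g)"
proof -
  let ?P = "onpolys N"
  have "(\<integral>y. poly q y * g y \<partial>\<mu>) = (\<Sum>j\<le>n. ip N q (?P j) * (\<integral>y. poly (?P j) y * g y \<partial>\<mu>))"
    by (subst expand[OF on m dq]) (simp add: int_poly_sum[OF g] mult.assoc)
  also have "\<dots> = ip N q (Opoly N \<mu> n g)"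
    unfolding Opoly_def by (simp add: ip_sum2[OF m] ip_smult2 mult.commute)
  finally show ?thesis .
qed

lemma Op_char:
  assumes on: "orthonormal_polys N (onpolys N)" and m: "mom N (\<lambda>_. 1)"
    and dQ: "degree Q \<le> n"
    and H: "\<And>q. degree q \<le> n \<Longrightarrow> (\<integral>y. poly q y * g y \<partial>\<mu>) = ip N q Q"
  shows "Op N \<mu> n g x = poly Q x"
proof -
  have "Op N \<mu> n g x = (\<Sum>j\<le>n. ip N Q (onpolys N j) * poly (onpolys N j) x)"
    unfolding Op_def using H[of "onpolys N _"] on_deg[OF on]
    by (intro sum.cong) (auto simp: ip_sym mult.commute)
  also have "\<dots> = poly Q x" using reproduce[OF on m dQ] by simp
  finally show ?thesis .
qed

definition Kpoly :: "real measure \<Rightarrow> nat \<Rightarrow> real \<Rightarrow> real poly" where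
  "Kpoly N n b = (\<Sum>j\<le>n. smult (poly (onpolys N j) b) (onpolys N j))"

lemma Kpoly_poly: "poly (Kpoly N n b) x = opkernel N n x b"
  unfolding Kpoly_def opkernel_def by (simp add: poly_sum mult.commute)

lemma Kpoly_deg: assumes on: "orthonormal_polys N (onpolys N)" shows "degree (Kpoly N n b) \<le> n"
  unfolding Kpoly_def
  by (rule degree_sum_le) (auto intro: order.trans[OF degree_smult_le] simp: on_deg[OF on])

lemma ip_Kpoly:
  assumes on: "orthonormal_polys N (onpolys N)" and m: "mom N (\<lambda>_. 1)" and dq: "degree q \<le> n"
  shows "ip N q (Kpoly N n b) = poly q b"
  unfolding Kpoly_def using reproduce[OF on m dq, of b]
  by (simp add: ip_sum2[OF m] ip_smult2 mult.commute)

lemma Kbb_pos: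
  assumes on: "orthonormal_polys N (onpolys N)"
  shows "opkernel N n b b > 0"
proof -
  let ?P = "onpolys N"
  have d0: "degree (?P 0) = 0" using on_deg[OF on] by simp
  have "poly (?P 0) b = coeff (?P 0) 0"
  proof -
    have "poly (?P 0) b = poly [:coeff (?P 0) 0:] b" using degree_0_id[OF d0] by simp
    then show ?thesis by simp
  qed
  then have "poly (?P 0) b \<noteq> 0" using on_lc[OF on, of 0] d0 by simp
  then have "0 < poly (?P 0) b * poly (?P 0) b" by (metis not_real_square_gt_zero)
  also have "\<dots> \<le> (\<Sum>j\<le>n. poly (?P j) b * poly (?P j) b)"
    by (rule member_le_sum[of 0 "{..n}" "\<lambda>j. poly (?P j) b * poly (?P j) b", simplified])
  finally show ?thesis unfolding opkernel_def .
qed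

lemma smult_sum2: "smult c (\<Sum>i\<in>S. f i) = (\<Sum>i\<in>S. smult c (f i))"
  by (induct S rule: infinite_finite_induct) (auto simp: smult_add_right)

lemma rank1:
  assumes on: "orthonormal_polys N (onpolys N)" and m: "mom N (\<lambda>_. 1)"
    and dD: "degree D \<le> n"
    and H: "\<And>q. degree q \<le> n \<Longrightarrow> poly q b = 0 \<Longrightarrow> ip N q D = 0"
  shows "D = smult (poly D b / opkernel N n b b) (Kpoly N n b)"
proof -
  let ?P = "onpolys N" and ?K = "opkernel N n b b"
  have K: "?K > 0" by (rule Kbb_pos[OF on])
  have c: "ip N D (?P j) = poly (?P j) b * poly D b / ?K" if "j \<le> n" for j
  proof -
    define r where "r = ?P j - smult (poly (?P j) b / ?K) (Kpoly N n b)"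
    have "degree r \<le> n" unfolding r_def using that on_deg[OF on] Kpoly_deg[OF on]
      by (intro degree_diff_le) (auto intro: order.trans[OF degree_smult_le])
    moreover have "poly r b = 0" unfolding r_def using K by (simp add: Kpoly_poly)
    ultimately have "ip N r D = 0" by (rule H)
    then have "ip N (?P j) D = poly (?P j) b / ?K * ip N (Kpoly N n b) D"
      unfolding r_def by (simp add: ip_diff1[OF m] ip_smult1)
    also have "ip N (Kpoly N n b) D = poly D b"
      using ip_Kpoly[OF on m dD] ip_sym by metis
    finally show ?thesis by (simp add: ip_sym)
  qed
  have "D = (\<Sum>j\<le>n. smult (ip N D (?P j)) (?P j))" by (rule expand[OF on m dD])
  also have "\<dots> = (\<Sum>j\<le>n. smult (poly D b / ?K) (smult (poly (?P j) b) (?P j)))"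
    using c by (intro sum.cong) (auto simp: field_simps)
  also have "\<dots> = smult (poly D b / ?K) (Kpoly N n b)"
    unfolding Kpoly_def by (simp add: smult_sum2)
  finally show ?thesis .
qed



lemma sets_nu[simp, measurable_cong]: "sets (nu_measure \<mu> a M k) = sets borel"
  unfolding nu_measure_def by (simp add: sets_measure_of_conv) (metis sets.sigma_sets_eq space_borel)

lemma space_nu[simp]: "space (nu_measure \<mu> a M k) = UNIV"
  unfolding nu_measure_def by (simp add: space_measure_of_conv)

lemma emeasure_nu:
  assumes sm: "sets \<mu> = sets borel" and S: "S \<in> sets borel"
  shows "emeasure (nu_measure \<mu> a M k) S = emeasure \<mu> S + (\<Sum>i<k. ennreal (M i) * indicator S (a i))"
  unfolding nu_measure_def
proof (rule emeasure_measure_of_sigma[OF _ _ _ S])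
  show "sigma_algebra UNIV (sets borel)"
    by (metis sets.sigma_algebra_axioms space_borel)
  show "positive (sets borel) (\<lambda>S. emeasure \<mu> S + (\<Sum>i<k. ennreal (M i) * indicator S (a i)))"
    by (simp add: positive_def)
  show "countably_additive (sets borel) (\<lambda>S. emeasure \<mu> S + (\<Sum>i<k. ennreal (M i) * indicator S (a i)))"
  proof (rule countably_additiveI)
    fix A :: "nat \<Rightarrow> real set" assume A: "range A \<subseteq> sets borel" "disjoint_family A"
    have "(\<Sum>n. emeasure \<mu> (A n) + (\<Sum>i<k. ennreal (M i) * indicator (A n) (a i)))
        = (\<Sum>n. emeasure \<mu> (A n)) + (\<Sum>n. \<Sum>i<k. ennreal (M i) * indicator (A n) (a i))"
      by (rule suminf_add[symmetric]) (auto intro: summableI)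
    also have "(\<Sum>n. \<Sum>i<k. ennreal (M i) * indicator (A n) (a i)) = (\<Sum>i<k. \<Sum>n. ennreal (M i) * indicator (A n) (a i))"
      by (rule suminf_sum) (auto intro: summableI)
    also have "\<dots> = (\<Sum>i<k. ennreal (M i) * indicator (\<Union>n. A n) (a i))"
      using A(2) by (simp add: suminf_indicator)
    also have "(\<Sum>n. emeasure \<mu> (A n)) = emeasure \<mu> (\<Union>n. A n)"
      using A sm by (intro suminf_emeasure) auto
    finally show "(\<Sum>n. emeasure \<mu> (A n) + (\<Sum>i<k. ennreal (M i) * indicator (A n) (a i)))
      = emeasure \<mu> (\<Union>n. A n) + (\<Sum>i<k. ennreal (M i) * indicator (\<Union>n. A n) (a i))" .
  qed
qed

lemma nn_integral_nu:
  assumes sm: "sets \<mu> = sets borel" and f: "f \<in> borel_measurable borel"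
  shows "(\<integral>\<^sup>+x. f x \<partial>nu_measure \<mu> a M k) = (\<integral>\<^sup>+x. f x \<partial>\<mu>) + (\<Sum>i<k. ennreal (M i) * f (a i))"
  using f
proof (induct rule: borel_measurable_induct)
  case (cong f g)
  have "(\<integral>\<^sup>+x. f x \<partial>nu_measure \<mu> a M k) = (\<integral>\<^sup>+x. g x \<partial>nu_measure \<mu> a M k)"
    using cong by (intro nn_integral_cong) auto
  moreover have "(\<integral>\<^sup>+x. f x \<partial>\<mu>) = (\<integral>\<^sup>+x. g x \<partial>\<mu>)"
    using cong sm by (intro nn_integral_cong) (auto simp: sets_eq_imp_space_eq[OF sm])
  ultimately show ?case using cong by simp
next
  case (set A)
  then show ?case using sm
    by (simp add: emeasure_nu[OF sm] nn_integral_indicator)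
next
  case (mult u c)
  have mu: "u \<in> borel_measurable \<mu>" using mult(2) by (simp add: measurable_cong_sets[OF sm refl])
  have mn: "u \<in> borel_measurable (nu_measure \<mu> a M k)" using mult measurable_cong_sets[OF sets_nu refl] by auto
  show ?case using mult
    by (simp add: nn_integral_cmult[OF mu] nn_integral_cmult[OF mn] distrib_left sum_distrib_left ac_simps)
next
  case (add u v)
  have mu: "u \<in> borel_measurable \<mu>" "v \<in> borel_measurable \<mu>"
    using add(1,4) by (simp_all add: measurable_cong_sets[OF sm refl])
  have mn: "u \<in> borel_measurable (nu_measure \<mu> a M k)" "v \<in> borel_measurable (nu_measure \<mu> a M k)"
    using add measurable_cong_sets[OF sets_nu refl] by auto
  show ?case using add
    by (simp add: nn_integral_add mu mn distrib_left sum.distrib ac_simps)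
next
  case (seq U)
  have mu: "U i \<in> borel_measurable \<mu>" for i using seq(1)[of i] by (simp add: measurable_cong_sets[OF sm refl])
  have mn: "U i \<in> borel_measurable (nu_measure \<mu> a M k)" for i
    using seq measurable_cong_sets[OF sets_nu refl] by auto
  have inc: "incseq (\<lambda>n. U n x)" for x using seq(4) by (auto simp: incseq_def le_fun_def)
  have "(\<integral>\<^sup>+x. (SUP i. U i) x \<partial>nu_measure \<mu> a M k) = (SUP i. \<integral>\<^sup>+x. U i x \<partial>nu_measure \<mu> a M k)"
    unfolding SUP_apply by (rule nn_integral_monotone_convergence_SUP[OF seq(4) mn])
  also have "\<dots> = (SUP i. (\<integral>\<^sup>+x. U i x \<partial>\<mu>) + (\<Sum>j<k. ennreal (M j) * U i (a j)))"
    using seq by simp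
  also have "\<dots> = (SUP i. \<integral>\<^sup>+x. U i x \<partial>\<mu>) + (SUP i. (\<Sum>j<k. ennreal (M j) * U i (a j)))"
  proof (rule ennreal_SUP_add)
    show "incseq (\<lambda>i. \<integral>\<^sup>+x. U i x \<partial>\<mu>)"
      using seq(4) by (auto simp: incseq_def le_fun_def intro!: nn_integral_mono)
    show "incseq (\<lambda>i. \<Sum>j<k. ennreal (M j) * U i (a j))"
      using inc by (auto simp: incseq_def intro!: sum_mono mult_left_mono)
  qed
  also have "(SUP i. (\<Sum>j<k. ennreal (M j) * U i (a j))) = (\<Sum>j<k. SUP i. ennreal (M j) * U i (a j))"
    by (rule ennreal_SUP_sum) (use inc in \<open>auto simp: incseq_def intro!: mult_left_mono\<close>)
  also have "\<dots> = (\<Sum>j<k. ennreal (M j) * (SUP i. U i (a j)))"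
    by (simp only: SUP_mult_left_ennreal)
  also have "\<dots> = (\<Sum>j<k. ennreal (M j) * (SUP i. U i) (a j))"
    by (simp only: SUP_apply)
  also have "(SUP i. \<integral>\<^sup>+x. U i x \<partial>\<mu>) = (\<integral>\<^sup>+x. (SUP i. U i) x \<partial>\<mu>)"
    unfolding SUP_apply by (rule nn_integral_monotone_convergence_SUP[OF seq(4) mu, symmetric])
  finally show ?case .
qed



lemma poly_meas[measurable]: fixes p :: "real poly" shows "poly p \<in> borel_measurable borel"
proof -
  have "continuous_on UNIV (\<lambda>x. poly p x)" using continuous_on_poly[OF continuous_on_id, of UNIV p] by simp
  then show ?thesis by (intro borel_measurable_continuous_onI) simp
qed

lemma integral_nu_nonneg:
  assumes sm: "sets \<mu> = sets borel" and h: "h \<in> borel_measurable borel" and hi: "integrable \<mu> h"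
    and h0: "\<And>x. h x \<ge> 0" and M: "\<And>i. i < k \<Longrightarrow> M i \<ge> 0"
  shows "integrable (nu_measure \<mu> a M k) h \<and>
    (\<integral>x. h x \<partial>nu_measure \<mu> a M k) = (\<integral>x. h x \<partial>\<mu>) + (\<Sum>i<k. M i * h (a i))"
proof -
  have hm: "h \<in> borel_measurable \<mu>" using h by (simp add: measurable_cong_sets[OF sm refl])
  have hn: "h \<in> borel_measurable (nu_measure \<mu> a M k)" using h by simp
  have e1: "(\<integral>\<^sup>+x. ennreal (h x) \<partial>\<mu>) = ennreal (\<integral>x. h x \<partial>\<mu>)"
    using hi h0 by (intro nn_integral_eq_integral) auto
  have e2: "(\<Sum>i<k. ennreal (M i) * ennreal (h (a i))) = ennreal (\<Sum>i<k. M i * h (a i))"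
    using M h0 by (simp add: ennreal_mult[symmetric]) (intro sum_ennreal; simp)
  have i0: "0 \<le> (\<integral>x. h x \<partial>\<mu>)" using h0 by simp
  have s0: "0 \<le> (\<Sum>i<k. M i * h (a i))" using h0 M by (auto intro!: sum_nonneg)
  have e: "(\<integral>\<^sup>+x. ennreal (h x) \<partial>nu_measure \<mu> a M k) = ennreal ((\<integral>x. h x \<partial>\<mu>) + (\<Sum>i<k. M i * h (a i)))"
  proof -
    show ?thesis using nn_integral_nu[OF sm, of "\<lambda>x. ennreal (h x)" a M k] h e1 e2 ennreal_plus[OF i0 s0]
      by simp
  qed
  have int: "integrable (nu_measure \<mu> a M k) h"
    using e h0 hn by (intro integrableI_nn_integral_finite) auto
  moreover have "(\<integral>x. h x \<partial>nu_measure \<mu> a M k) = (\<integral>x. h x \<partial>\<mu>) + (\<Sum>i<k. M i * h (a i))"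
  proof -
    have "(\<integral>x. h x \<partial>nu_measure \<mu> a M k) = enn2real (\<integral>\<^sup>+x. ennreal (h x) \<partial>nu_measure \<mu> a M k)"
      by (rule integral_eq_nn_integral[OF hn]) (use h0 in auto)
    also have "\<dots> = enn2real (ennreal ((\<integral>x. h x \<partial>\<mu>) + (\<Sum>i<k. M i * h (a i))))"
      by (simp only: e)
    also have "\<dots> = (\<integral>x. h x \<partial>\<mu>) + (\<Sum>i<k. M i * h (a i))"
      by (rule enn2real_ennreal) (use i0 s0 in simp)
    finally show ?thesis .
  qed
  ultimately show ?thesis by blast
qed

lemma integral_nu:
  assumes sm: "sets \<mu> = sets borel" and h: "h \<in> borel_measurable borel" and hi: "integrable \<mu> h"
    and M: "\<And>i. i < k \<Longrightarrow> M i \<ge> 0"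
  shows "integrable (nu_measure \<mu> a M k) h"
    "(\<integral>x. h x \<partial>nu_measure \<mu> a M k) = (\<integral>x. h x \<partial>\<mu>) + (\<Sum>i<k. M i * h (a i))"
proof -
  define hp where "hp x = max (h x) 0" for x
  define hn where "hn x = max (- h x) 0" for x
  have hpn: "h = (\<lambda>x. hp x - hn x)" by (auto simp: hp_def hn_def fun_eq_iff)
  have mp: "hp \<in> borel_measurable borel" "hn \<in> borel_measurable borel" using h unfolding hp_def hn_def by auto
  have ip: "integrable \<mu> hp" "integrable \<mu> hn" using hi unfolding hp_def hn_def by auto
  have nn: "\<And>x. hp x \<ge> 0" "\<And>x. hn x \<ge> 0" by (auto simp: hp_def hn_def)
  note P = integral_nu_nonneg[OF sm mp(1) ip(1) nn(1) M, where a=a] integral_nu_nonneg[OF sm mp(2) ip(2) nn(2) M, where a=a]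
  show "integrable (nu_measure \<mu> a M k) h" using P nn M by (subst hpn) auto
  have "(\<integral>x. h x \<partial>nu_measure \<mu> a M k) = (\<integral>x. hp x \<partial>nu_measure \<mu> a M k) - (\<integral>x. hn x \<partial>nu_measure \<mu> a M k)"
    using P nn M by (subst hpn) (simp add: Bochner_Integration.integral_diff)
  also have "\<dots> = (\<integral>x. hp x \<partial>\<mu>) + (\<Sum>i<k. M i * hp (a i)) - ((\<integral>x. hn x \<partial>\<mu>) + (\<Sum>i<k. M i * hn (a i)))"
    using P nn M by simp
  also have "\<dots> = (\<integral>x. h x \<partial>\<mu>) + (\<Sum>i<k. M i * h (a i))"
  proof -
    have "(\<integral>x. h x \<partial>\<mu>) = (\<integral>x. hp x \<partial>\<mu>) - (\<integral>x. hn x \<partial>\<mu>)"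
      using ip by (subst hpn) simp
    moreover have "(\<Sum>i<k. M i * h (a i)) = (\<Sum>i<k. M i * hp (a i)) - (\<Sum>i<k. M i * hn (a i))"
    proof -
      have "h y = hp y - hn y" for y using hpn by metis
      then show ?thesis by (simp add: right_diff_distrib sum_subtractf)
    qed
    ultimately show ?thesis by simp
  qed
  finally show "(\<integral>x. h x \<partial>nu_measure \<mu> a M k) = (\<integral>x. h x \<partial>\<mu>) + (\<Sum>i<k. M i * h (a i))" .
qed

definition good :: "real measure \<Rightarrow> bool" where
  "good N \<longleftrightarrow> sets N = sets borel \<and> mom N (\<lambda>_. 1) \<and> posdef N"

lemma good_on: "good N \<Longrightarrow> orthonormal_polys N (onpolys N)"
  unfolding good_def by (intro onpolys_on) auto

lemma ip_nu:
  assumes sm: "sets \<mu> = sets borel" and m: "mom \<mu> (\<lambda>_. 1)" and M: "\<And>i. i < k \<Longrightarrow> M i \<ge> 0"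
  shows "ip (nu_measure \<mu> a M k) p q = ip \<mu> p q + (\<Sum>i<k. M i * (poly p (a i) * poly q (a i)))"
  unfolding ip_def
  by (rule integral_nu[OF sm _ _ M]) (use mom_poly[OF mom1_poly[OF m]] in auto)

lemma mom_nu:
  assumes sm: "sets \<mu> = sets borel" and m: "mom \<mu> (\<lambda>_. 1)" and M: "\<And>i. i < k \<Longrightarrow> M i \<ge> 0"
  shows "mom (nu_measure \<mu> a M k) (\<lambda>_. 1)"
  unfolding mom_def using m unfolding mom_def by (auto intro!: integral_nu[OF sm _ _ M])

lemma good_nu:
  assumes g: "good \<mu>" and M: "\<And>i. i < k \<Longrightarrow> M i \<ge> 0"
  shows "good (nu_measure \<mu> a M k)"
proof -
  have sm: "sets \<mu> = sets borel" and m: "mom \<mu> (\<lambda>_. 1)" and pd: "posdef \<mu>" using g by (auto simp: good_def)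
  have "posdef (nu_measure \<mu> a M k)"
    unfolding posdef_def
  proof (intro allI impI)
    fix q :: "real poly" assume "q \<noteq> 0"
    then have "ip \<mu> q q > 0" using pd by (auto simp: posdef_def)
    moreover have "(\<Sum>i<k. M i * (poly q (a i) * poly q (a i))) \<ge> 0" using M by (auto intro!: sum_nonneg)
    ultimately show "ip (nu_measure \<mu> a M k) q q > 0" by (simp add: ip_nu[OF sm m M])
  qed
  then show ?thesis using mom_nu[OF sm m M] by (simp add: good_def)
qed



lemma sets_muA[simp, measurable_cong]: "sets (muA \<mu> a A) = sets \<mu>"
  unfolding muA_def by simp

lemma muA_empty: "muA \<mu> a {} = \<mu>"
  unfolding muA_def by (simp add: density_1)

lemma wA_empty: "wA a {} p x = 1"
  unfolding wA_def by simp

lemma muA_insert: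
  assumes sm: "sets \<mu> = sets borel" and fin: "finite A" and k: "k \<notin> A"
  shows "muA (muA \<mu> a {k}) a A = muA \<mu> a (insert k A)"
proof -
  have m1: "(\<lambda>x. ennreal (\<Prod>i\<in>{k}. (x - a i)^2)) \<in> borel_measurable \<mu>"
    by (simp add: measurable_cong_sets[OF sm refl])
  have m2: "(\<lambda>x. ennreal (\<Prod>i\<in>A. (x - a i)^2)) \<in> borel_measurable \<mu>"
    by (simp add: measurable_cong_sets[OF sm refl])
  show ?thesis
    unfolding muA_def density_density_eq[OF m1 m2]
    using fin k by (simp add: ennreal_mult'[symmetric] prod_nonneg)
qed

lemma wA_insert:
  assumes fin: "finite A" and k: "k \<notin> A"
  shows "wA a {k} p x * wA a A p x = wA a (insert k A) p x"
  unfolding wA_def using fin k by simp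

lemma mub_int:
  assumes sm: "sets \<mu> = sets borel" and f: "f \<in> borel_measurable borel"
  shows "integrable (muA \<mu> a {k}) f \<longleftrightarrow> integrable \<mu> (\<lambda>x. (x - a k)^2 * f x)"
    "(\<integral>x. f x \<partial>muA \<mu> a {k}) = (\<integral>x. (x - a k)^2 * f x \<partial>\<mu>)"
proof -
  have fm: "f \<in> borel_measurable \<mu>" using f by (simp add: measurable_cong_sets[OF sm refl])
  have wm: "(\<lambda>x. (x - a k)^2) \<in> borel_measurable \<mu>" by (simp add: measurable_cong_sets[OF sm refl])
  have e: "muA \<mu> a {k} = density \<mu> (\<lambda>x. ennreal ((x - a k)^2))" unfolding muA_def by simp
  show "integrable (muA \<mu> a {k}) f \<longleftrightarrow> integrable \<mu> (\<lambda>x. (x - a k)^2 * f x)"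
    unfolding e using integrable_density[OF fm wm] by simp
  show "(\<integral>x. f x \<partial>muA \<mu> a {k}) = (\<integral>x. (x - a k)^2 * f x \<partial>\<mu>)"
    unfolding e using integral_density[OF fm wm] by simp
qed

definition Lb :: "real \<Rightarrow> real poly \<Rightarrow> real poly" where
  "Lb b r = [:-b, 1:] * r"

lemma poly_Lb: "poly (Lb b r) x = (x - b) * poly r x"
  unfolding Lb_def by (simp add: algebra_simps)

lemma mom_mub:
  assumes sm: "sets \<mu> = sets borel" and g: "g \<in> borel_measurable borel" and m: "mom \<mu> g"
  shows "mom (muA \<mu> a {k}) (\<lambda>y. g y / (y - a k))"
  unfolding mom_def
proof
  fix j
  have "integrable \<mu> (\<lambda>x. poly (Lb (a k) (monom 1 j)) x * g x)" by (rule mom_poly[OF m])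
  moreover have "(\<lambda>x. poly (Lb (a k) (monom 1 j)) x * g x) = (\<lambda>x. (x - a k)^2 * (x ^ j * (g x / (x - a k))))"
    by (auto simp: poly_Lb poly_monom power2_eq_square fun_eq_iff)
  ultimately show "integrable (muA \<mu> a {k}) (\<lambda>x. x ^ j * (g x / (x - a k)))"
    using g by (subst mub_int[OF sm]) auto
qed

lemma int_mub:
  assumes sm: "sets \<mu> = sets borel" and g: "g \<in> borel_measurable borel" and m: "mom \<mu> g"
  shows "(\<integral>y. poly r y * (g y / (y - a k)) \<partial>muA \<mu> a {k}) = (\<integral>y. poly (Lb (a k) r) y * g y \<partial>\<mu>)"
  using g
  by (subst mub_int[OF sm]) (auto simp: poly_Lb power2_eq_square intro!: Bochner_Integration.integral_cong)

lemma mom1_mub: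
  assumes sm: "sets \<mu> = sets borel" and m: "mom \<mu> (\<lambda>_. 1)"
  shows "mom (muA \<mu> a {k}) (\<lambda>_. 1)"
  unfolding mom_def
proof
  fix j
  have "integrable \<mu> (\<lambda>x. poly (Lb (a k) (Lb (a k) (monom 1 j))) x * 1)" by (rule mom_poly[OF m])
  then show "integrable (muA \<mu> a {k}) (\<lambda>x. x ^ j * 1)"
    by (subst mub_int[OF sm]) (auto simp: poly_Lb poly_monom power2_eq_square mult_ac)
qed

lemma ip_mub:
  assumes sm: "sets \<mu> = sets borel"
  shows "ip (muA \<mu> a {k}) r s = ip \<mu> (Lb (a k) r) (Lb (a k) s)"
  unfolding ip_def
  by (subst mub_int[OF sm]) (auto simp: poly_Lb power2_eq_square mult_ac)

lemma good_mub:
  assumes g: "good \<mu>"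
  shows "good (muA \<mu> a {k})"
proof -
  have sm: "sets \<mu> = sets borel" and m: "mom \<mu> (\<lambda>_. 1)" and pd: "posdef \<mu>" using g by (auto simp: good_def)
  have "posdef (muA \<mu> a {k})"
    unfolding posdef_def
  proof (intro allI impI)
    fix q :: "real poly" assume "q \<noteq> 0"
    then have "Lb (a k) q \<noteq> 0" unfolding Lb_def by (metis mult_eq_0_iff pCons_eq_0_iff zero_neq_one)
    then show "ip (muA \<mu> a {k}) q q > 0" using pd by (simp add: ip_mub[OF sm] posdef_def)
  qed
  then show ?thesis using mom1_mub[OF sm m] sm by (simp add: good_def)
qed

lemma ip_rho':
  assumes g: "good \<mu>" and M: "\<And>i. i < k \<Longrightarrow> M i \<ge> 0"
  shows "ip (nu_measure (muA \<mu> a {k}) a (\<lambda>i. M i * (a i - a k)^2) k) r s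
       = ip (nu_measure \<mu> a M k) (Lb (a k) r) (Lb (a k) s)"
proof -
  have sm: "sets \<mu> = sets borel" and m: "mom \<mu> (\<lambda>_. 1)" using g by (auto simp: good_def)
  have sm': "sets (muA \<mu> a {k}) = sets borel" using sm by simp
  have M': "\<And>i. i < k \<Longrightarrow> M i * (a i - a k)^2 \<ge> 0" using M by simp
  have e1: "ip (nu_measure (muA \<mu> a {k}) a (\<lambda>i. M i * (a i - a k)^2) k) r s
     = ip (muA \<mu> a {k}) r s + (\<Sum>i<k. M i * (a i - a k)^2 * (poly r (a i) * poly s (a i)))"
    by (rule ip_nu[OF sm' mom1_mub[OF sm m]]) (use M in simp)
  show ?thesis
    unfolding e1 ip_mub[OF sm] using ip_nu[OF sm m M, where a=a and p="Lb (a k) r" and q="Lb (a k) s"]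
    by (simp add: poly_Lb power2_eq_square mult_ac)
qed

lemma posdef_incr:
  assumes sm: "sets \<mu> = sets borel" and m: "mom \<mu> (\<lambda>_. 1)"
    and incr: "infinite {x. point_of_increase \<mu> x}"
  shows "posdef \<mu>"
  unfolding posdef_def
proof (intro allI impI)
  fix q :: "real poly" assume q: "q \<noteq> 0"
  have "finite {x. poly q x = 0}" using poly_roots_finite[OF q] .
  then obtain x0 where x0: "point_of_increase \<mu> x0" "poly q x0 \<noteq> 0"
    using incr by (metis (mono_tags, lifting) infinite_super mem_Collect_eq subsetI)
  have "open {x. poly q x \<noteq> 0}"
    using open_Collect_neq[of "poly q" "\<lambda>_. 0"] continuous_on_poly[OF continuous_on_id, of UNIV q]
    by (simp add: continuous_on_const)
  then obtain e where e: "e > 0" "ball x0 e \<subseteq> {x. poly q x \<noteq> 0}"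
    using x0(2) by (auto simp: open_contains_ball)
  have pos: "emeasure \<mu> {x0 - e<..<x0 + e} > 0" using x0(1) e(1) unfolding point_of_increase_def by blast
  have int: "integrable \<mu> (\<lambda>x. poly q x * poly q x)" using mom_poly[OF mom1_poly[OF m]] .
  have nn: "ip \<mu> q q \<ge> 0" unfolding ip_def by simp
  show "ip \<mu> q q > 0"
  proof (rule ccontr)
    assume "\<not> ip \<mu> q q > 0"
    then have "ip \<mu> q q = 0" using nn by simp
    then have "AE x in \<mu>. poly q x * poly q x = 0"
      unfolding ip_def using integral_nonneg_eq_0_iff_AE[OF int] by simp
    moreover have S: "{x\<in>space \<mu>. \<not> poly q x * poly q x = 0} \<in> sets \<mu>"
      using \<open>open {x. poly q x \<noteq> 0}\<close> by (simp add: sm sets_eq_imp_space_eq[OF sm] borel_open)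
    ultimately have "emeasure \<mu> {x\<in>space \<mu>. \<not> poly q x * poly q x = 0} = 0"
      using AE_iff_measurable[OF S refl] by simp
    moreover have "{x0 - e<..<x0 + e} \<subseteq> {x\<in>space \<mu>. \<not> poly q x * poly q x = 0}"
      using e(2) by (auto simp: ball_eq_greaterThanLessThan sets_eq_imp_space_eq[OF sm])
    ultimately have "emeasure \<mu> {x0 - e<..<x0 + e} = 0"
      using S by (metis emeasure_eq_0)
    then show False using pos by simp
  qed
qed



lemma degree_Lb: "degree (Lb b r) \<le> degree r + 1"
proof -
  have "degree (Lb b r) \<le> degree [:-b, 1:] + degree r" unfolding Lb_def by (rule degree_mult_le)
  then show ?thesis by simp
qed

lemma root_factor:
  fixes q :: "real poly"
  assumes "poly q b = 0" "degree q \<le> n" "n > 0"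
  shows "\<exists>r. q = Lb b r \<and> degree r \<le> n - 1"
proof -
  obtain r where r: "q = [:-b, 1:] * r" using assms(1) poly_eq_0_iff_dvd by (metis dvdE)
  have "degree r \<le> n - 1"
  proof (cases "r = 0")
    case False
    have "degree ([:-b, 1:] * r) = degree [:-b, 1:] + degree r" by (rule degree_mult_eq) (use False in simp_all)
    then have "degree q = degree r + 1" using r by simp
    then show ?thesis using assms by simp
  qed simp
  then show ?thesis using r by (auto simp: Lb_def)
qed

lemma step_identity:
  fixes \<mu> :: "real measure" and a M :: "nat \<Rightarrow> real" and k n :: nat and g :: "real \<Rightarrow> real" and x :: real
  assumes gm: "good \<mu>" and M: "\<And>i. i < Suc k \<Longrightarrow> M i \<ge> 0"
    and g: "g \<in> borel_measurable borel" and mg: "mom \<mu> g"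
  defines "\<rho> \<equiv> nu_measure \<mu> a M k"
  defines "lam \<equiv> 1 / (1 + M k * opkernel \<rho> n (a k) (a k))"
  shows "Op (nu_measure \<mu> a M (Suc k)) \<mu> n g x =
    lam * Op \<rho> \<mu> n g x + (1 - lam) *
      (if n = 0 then 0 else (x - a k) *
         Op (nu_measure (muA \<mu> a {k}) a (\<lambda>i. M i * (a i - a k)^2) k) (muA \<mu> a {k}) (n - 1)
            (\<lambda>y. g y / (y - a k)) x)"
proof -
  define b where "b = a k"
  define \<nu> where "\<nu> = nu_measure \<mu> a M (Suc k)"
  define \<mu>' where "\<mu>' = muA \<mu> a {k}"
  define \<rho>' where "\<rho>' = nu_measure \<mu>' a (\<lambda>i. M i * (a i - a k)^2) k"
  define g' where "g' y = g y / (y - a k)" for y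
  have sm: "sets \<mu> = sets borel" and m1: "mom \<mu> (\<lambda>_. 1)" using gm by (auto simp: good_def)
  have Mk: "\<And>i. i < k \<Longrightarrow> M i \<ge> 0" using M by simp
  have grho: "good \<rho>" unfolding \<rho>_def by (rule good_nu[OF gm Mk])
  have gnu: "good \<nu>" unfolding \<nu>_def by (rule good_nu[OF gm M])
  have gmu': "good \<mu>'" unfolding \<mu>'_def by (rule good_mub[OF gm])
  have grho': "good \<rho>'" unfolding \<rho>'_def by (rule good_nu[OF gmu']) (use Mk in simp)
  have mg': "mom \<mu>' g'" unfolding \<mu>'_def g'_def by (rule mom_mub[OF sm g mg])
  note onr = good_on[OF grho] and onn = good_on[OF gnu] and onr' = good_on[OF grho']
  have mr: "mom \<rho> (\<lambda>_. 1)" "mom \<nu> (\<lambda>_. 1)" "mom \<rho>' (\<lambda>_. 1)"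
    using grho gnu grho' by (auto simp: good_def)
  define K where "K = opkernel \<rho> n b b"
  have K: "K > 0" unfolding K_def by (rule Kbb_pos[OF onr])
  have Mk0: "M k \<ge> 0" using M by simp
  have lam: "lam * (1 + M k * K) = 1" unfolding lam_def K_def b_def using K Mk0
    by (simp add: b_def K_def) (smt (verit) mult_nonneg_nonneg)
  define RA where "RA = Opoly \<rho> \<mu> n g"
  have dRA: "degree RA \<le> n" unfolding RA_def by (rule Opoly_deg[OF onr])
  have HA: "\<And>q. degree q \<le> n \<Longrightarrow> (\<integral>y. poly q y * g y \<partial>\<mu>) = ip \<rho> q RA"
    unfolding RA_def by (rule Op_orth[OF onr mr(1) mg])
  define RBh where "RBh = (if n = 0 then 0 else Lb b (Opoly \<rho>' \<mu>' (n - 1) g'))"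
  have dRBh: "degree RBh \<le> n"
  proof (cases "n = 0")
    case False
    have "degree (Opoly \<rho>' \<mu>' (n - 1) g') \<le> n - 1" by (rule Opoly_deg[OF onr'])
    then show ?thesis using False degree_Lb[of b "Opoly \<rho>' \<mu>' (n - 1) g'"] unfolding RBh_def
      by simp
  qed (simp add: RBh_def)
  have RBhb: "poly RBh b = 0" unfolding RBh_def by (simp add: poly_Lb)
  have HB: "(\<integral>y. poly q y * g y \<partial>\<mu>) = ip \<rho> q RBh" if q: "degree q \<le> n" "poly q b = 0" for q
  proof (cases "n = 0")
    case True
    then have "degree q = 0" using q by simp
    then have "q = [:coeff q 0:]" using degree_0_id by metis
    then have "q = 0" using q(2) by (metis poly_pCons mult_zero_right add.right_neutral pCons_0_0 poly_0)
    then show ?thesis by (simp add: ip_def)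
  next
    case False
    then obtain r where r: "q = Lb b r" "degree r \<le> n - 1" using root_factor[OF q(2) q(1)] by blast
    have "(\<integral>y. poly q y * g y \<partial>\<mu>) = (\<integral>y. poly r y * g' y \<partial>\<mu>')"
      unfolding r(1) \<mu>'_def g'_def b_def by (rule int_mub[OF sm g mg, symmetric])
    also have "\<dots> = ip \<rho>' r (Opoly \<rho>' \<mu>' (n - 1) g')" by (rule Op_orth[OF onr' mr(3) mg' r(2)])
    also have "\<dots> = ip \<rho> q RBh"
    proof -
      have "RBh = Lb b (Opoly \<rho>' \<mu>' (n - 1) g')" using False by (simp add: RBh_def)
      then show ?thesis unfolding \<rho>'_def \<mu>'_def \<rho>_def r(1) b_def
        by (simp only:) (rule ip_rho'[OF gm Mk])
    qed
    finally show ?thesis .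
  qed
  define D where "D = RA - RBh"
  have dD: "degree D \<le> n" unfolding D_def using dRA dRBh by (rule degree_diff_le)
  have HD: "ip \<rho> q D = 0" if "degree q \<le> n" "poly q b = 0" for q
    unfolding D_def using HA[OF that(1)] HB[OF that] by (simp add: ip_diff2[OF mr(1)])
  have Deq: "D = smult (poly D b / K) (Kpoly \<rho> n b)"
    unfolding K_def by (rule rank1[OF onr mr(1) dD HD])
  have Db: "poly D b = poly RA b" unfolding D_def using RBhb by simp
  define Q where "Q = RBh + smult (lam * poly RA b / K) (Kpoly \<rho> n b)"
  have dQ: "degree Q \<le> n" unfolding Q_def using dRBh Kpoly_deg[OF onr]
    by (intro degree_add_le) (auto intro: order.trans[OF degree_smult_le])
  have Qb: "poly Q b = lam * poly RA b" unfolding Q_def using RBhb K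
    by (simp add: Kpoly_poly K_def)
  have HQ: "(\<integral>y. poly q y * g y \<partial>\<mu>) = ip \<nu> q Q" if dq: "degree q \<le> n" for q
  proof -
    have ipnu: "ip \<nu> q Q = ip \<rho> q Q + M k * (poly q b * poly Q b)"
      unfolding \<nu>_def \<rho>_def b_def
      using ip_nu[OF sm m1 M, where a=a and p=q and q=Q] ip_nu[OF sm m1 Mk, where a=a and p=q and q=Q]
      by simp
    have KK: "ip \<rho> q (Kpoly \<rho> n b) = poly q b" by (rule ip_Kpoly[OF onr mr(1) dq])
    have "ip \<rho> q RA = ip \<rho> q RBh + ip \<rho> q D" unfolding D_def by (simp add: ip_diff2[OF mr(1)])
    also have "ip \<rho> q D = poly RA b / K * poly q b"
      by (subst Deq) (simp add: ip_smult2 KK Db)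
    finally have A: "ip \<rho> q RA = ip \<rho> q RBh + poly RA b / K * poly q b" .
    have "ip \<rho> q Q = ip \<rho> q RBh + lam * poly RA b / K * poly q b"
      unfolding Q_def by (simp add: ip_add2[OF mr(1)] ip_smult2 KK)
    then have "ip \<nu> q Q = ip \<rho> q RA + poly RA b * poly q b * ((lam - 1) / K + M k * lam)"
      using ipnu A Qb K by (simp add: field_simps)
    also have "(lam - 1) / K + M k * lam = 0" using lam K by (simp add: field_simps)
    finally show ?thesis using HA[OF dq] by simp
  qed
  have "Op \<nu> \<mu> n g x = poly Q x" by (rule Op_char[OF onn mr(2) dQ HQ])
  also have "poly Q x = lam * poly RA x + (1 - lam) * poly RBh x"
  proof -
    have "poly RA x = poly RBh x + poly D x" unfolding D_def by simp
    also have "poly D x = poly RA b / K * poly (Kpoly \<rho> n b) x" by (subst Deq) (simp add: Db)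
    finally show ?thesis unfolding Q_def by (simp add: algebra_simps)
  qed
  also have "poly RA x = Op \<rho> \<mu> n g x" unfolding RA_def by (rule Opoly_poly)
  also have "poly RBh x = (if n = 0 then 0 else (x - a k) * Op \<rho>' \<mu>' (n - 1) g' x)"
    unfolding RBh_def b_def by (simp add: poly_Lb Opoly_poly)
  finally show ?thesis unfolding \<nu>_def \<rho>'_def \<mu>'_def g'_def .
qed



definition NI :: "real measure \<Rightarrow> real \<Rightarrow> (real \<Rightarrow> real) \<Rightarrow> ennreal" where
  "NI N p F = (\<integral>\<^sup>+ x. ennreal (\<bar>F x\<bar> powr p) \<partial>N)"

lemma Lp_norm_NI: "Lp_norm N p F = (if NI N p F = \<infinity> then \<infinity> else ennreal (enn2real (NI N p F) powr (1 / p)))"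
  unfolding Lp_norm_def NI_def Let_def by simp

lemma L1:
  assumes le: "Lp_norm N p F \<le> ennreal C * Lp_norm N p f" and fin: "NI N p f < \<infinity>" and p: "p > 0"
  shows "NI N p F \<le> ennreal (max C 0 powr p) * NI N p f"
proof -
  define C' where "C' = max C 0"
  have C': "C' \<ge> 0" "ennreal C = ennreal C'" unfolding C'_def by (auto simp: max_def ennreal_neg)
  obtain rf where rf: "NI N p f = ennreal rf" "rf \<ge> 0" using fin by (cases "NI N p f") auto
  have nf: "Lp_norm N p f = ennreal (rf powr (1/p))" using rf by (simp add: Lp_norm_NI)
  have "NI N p F \<noteq> \<infinity>"
  proof
    assume "NI N p F = \<infinity>"
    then have "Lp_norm N p F = \<infinity>" by (simp add: Lp_norm_NI)
    moreover have "ennreal C' * ennreal (rf powr (1/p)) = ennreal (C' * rf powr (1/p))"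
      using C' by (simp add: ennreal_mult)
    ultimately show False using le unfolding nf C'(2) by (simp add: top_unique)
  qed
  then obtain rF where rF: "NI N p F = ennreal rF" "rF \<ge> 0" by (cases "NI N p F") auto
  have "ennreal (rF powr (1/p)) \<le> ennreal (C' * rf powr (1/p))"
    using le rF C' unfolding nf by (simp add: Lp_norm_NI ennreal_mult'[symmetric])
  then have a: "rF powr (1/p) \<le> C' * rf powr (1/p)" using C' by (simp add: ennreal_le_iff)
  have "rF = (rF powr (1/p)) powr p" using rF p by (simp add: powr_powr)
  also have "\<dots> \<le> (C' * rf powr (1/p)) powr p" using a p by (intro powr_mono2) auto
  also have "\<dots> = C' powr p * rf" using C' rf p by (simp add: powr_mult powr_powr)
  finally have "rF \<le> C' powr p * rf" .
  then show ?thesis unfolding rF rf C'_def[symmetric] using rf C'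
    by (simp add: ennreal_mult'[symmetric] ennreal_leI)
qed

lemma L2:
  assumes le: "NI N p F \<le> ennreal c * NI N p f" and fin: "NI N p f < \<infinity>" and p: "p > 0" and c: "c \<ge> 0"
  shows "Lp_norm N p F \<le> ennreal (c powr (1/p)) * Lp_norm N p f"
proof -
  obtain rf where rf: "NI N p f = ennreal rf" "rf \<ge> 0" using fin by (cases "NI N p f") auto
  have le2: "NI N p F \<le> ennreal (c * rf)" using le rf c by (simp add: ennreal_mult')
  then have "NI N p F \<noteq> \<infinity>" by (auto simp: top_unique)
  then obtain rF where rF0: "NI N p F = ennreal rF" "rF \<ge> 0" by (cases "NI N p F") auto
  have rF: "NI N p F = ennreal rF" "rF \<ge> 0" "rF \<le> c * rf"
    using rF0 le2 c rf by (auto simp: ennreal_le_iff)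
  have "rF powr (1/p) \<le> (c * rf) powr (1/p)" using rF p by (intro powr_mono2) auto
  also have "\<dots> = c powr (1/p) * rf powr (1/p)" using c rf by (simp add: powr_mult)
  finally show ?thesis using rF rf c
    by (simp add: Lp_norm_NI ennreal_mult'[symmetric] ennreal_leI)
qed

lemma mom_from_kernel:
  assumes gm: "good \<mu>" and K: "\<And>n x. integrable \<mu> (\<lambda>y. opkernel \<mu> n x y * g y)"
  shows "mom \<mu> g"
proof -
  let ?P = "onpolys \<mu>"
  have on: "orthonormal_polys \<mu> ?P" by (rule good_on[OF gm])
  have m1: "mom \<mu> (\<lambda>_. 1)" using gm by (simp add: good_def)
  have Pi: "integrable \<mu> (\<lambda>y. poly (?P n) y * g y)" for n
  proof -
    have "?P n \<noteq> 0" using on_lc[OF on, of n] by auto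
    then obtain x where x: "poly (?P n) x \<noteq> 0" using poly_all_0_iff_0 by blast
    have "integrable \<mu> (\<lambda>y. poly (?P n) x * (poly (?P n) y * g y))"
    proof (cases n)
      case 0
      have "(\<lambda>y. opkernel \<mu> n x y * g y) = (\<lambda>y. poly (?P n) x * (poly (?P n) y * g y))"
        using 0 by (simp add: opkernel_def mult.assoc)
      then show ?thesis using K[of n x] by simp
    next
      case (Suc m)
      have eq: "(\<lambda>y. opkernel \<mu> n x y * g y - opkernel \<mu> m x y * g y) = (\<lambda>y. poly (?P n) x * (poly (?P n) y * g y))"
        using Suc by (simp add: opkernel_def algebra_simps)
      have "integrable \<mu> (\<lambda>y. opkernel \<mu> n x y * g y - opkernel \<mu> m x y * g y)"
        by (rule Bochner_Integration.integrable_diff[OF K K])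
      then show ?thesis by (simp only: eq)
    qed
    then show ?thesis using x by simp
  qed
  show ?thesis unfolding mom_def
  proof
    fix j
    have "monom 1 j = (\<Sum>i\<le>j. smult (ip \<mu> (monom 1 j) (?P i)) (?P i))"
      by (rule expand[OF on m1]) (simp add: degree_monom_eq)
    then have "poly (monom 1 j) x = poly (\<Sum>i\<le>j. smult (ip \<mu> (monom 1 j) (?P i)) (?P i)) x" for x
      by simp
    then have "x ^ j = (\<Sum>i\<le>j. ip \<mu> (monom 1 j) (?P i) * poly (?P i) x)" for x
      by (simp add: poly_monom poly_sum)
    then have "(\<lambda>x. x ^ j * g x) = (\<lambda>x. (\<Sum>i\<le>j. ip \<mu> (monom 1 j) (?P i) * (poly (?P i) x * g x)))"
      by (simp add: sum_distrib_right mult.assoc)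
    then show "integrable \<mu> (\<lambda>x. x ^ j * g x)" using Pi by simp
  qed
qed

lemma null_mub:
  assumes sm: "sets \<mu> = sets borel" and z: "emeasure \<mu> {c} = 0"
  shows "emeasure (muA \<mu> a {k}) {c} = 0"
proof -
  have "{c} \<in> null_sets \<mu>" using z sm by (simp add: null_sets_def)
  then have "AE x in \<mu>. x \<in> {c} \<longrightarrow> ennreal ((x - a k)^2) = 0"
    by (intro AE_I'[of "{c}"]) auto
  then have "{c} \<in> null_sets (density \<mu> (\<lambda>x. ennreal ((x - a k)^2)))"
    using sm by (subst null_sets_density_iff) (auto simp: measurable_cong_sets[OF sm refl])
  then show ?thesis unfolding muA_def by (simp add: null_setsD1)
qed

lemma nu0: assumes sm: "sets \<mu> = sets borel" shows "nu_measure \<mu> a M 0 = \<mu>"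
  by (rule measure_eqI) (auto simp: sm emeasure_nu[OF sm])



lemma pw1:
  fixes t p z :: real assumes t: "t > 0" and p: "p > 0" and z: "z \<ge> 0"
  shows "t powr 2 * (z * t powr (1 - 2/p)) powr p = (z * t) powr p"
proof -
  have "(z * t powr (1 - 2/p)) powr p = z powr p * t powr ((1 - 2/p) * p)"
    using t z by (simp add: powr_mult powr_powr)
  also have "(1 - 2/p) * p = p - 2" using p by (simp add: field_simps)
  finally have "t powr 2 * (z * t powr (1 - 2/p)) powr p = z powr p * (t powr 2 * t powr (p - 2))" by simp
  also have "t powr 2 * t powr (p - 2) = t powr p" by (simp add: powr_add[symmetric])
  finally show ?thesis using t z by (simp add: powr_mult)
qed

lemma pw2:
  fixes t p z :: real assumes t: "t > 0" and p: "p > 0" and z: "z \<ge> 0"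
  shows "t powr 2 * (z * t powr (1 - 2/p) / t) powr p = z powr p"
proof -
  have "t powr (1 - 2/p) / t = t powr (- 2/p)" using t
    by (simp add: powr_diff powr_minus_divide)
  then have "z * t powr (1 - 2/p) / t = z * t powr (- 2/p)" by (simp add: times_divide_eq_right[symmetric])
  then have "(z * t powr (1 - 2/p) / t) powr p = z powr p * t powr ((- 2/p) * p)"
    using t z by (simp add: powr_mult powr_powr)
  also have "(- 2/p) * p = - 2" using p by simp
  finally have "t powr 2 * (z * t powr (1 - 2/p) / t) powr p = z powr p * (t powr 2 * t powr (- 2))" by simp
  also have "t powr 2 * t powr (- 2) = 1" using t by (simp only: powr_add[symmetric]) simp
  finally show ?thesis by simp
qed

lemma wk: "wA a {k} p x = \<bar>x - a k\<bar> powr (1 - 2 / p)"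
  unfolding wA_def by simp

lemma NI_mub:
  assumes sm: "sets \<mu> = sets borel" and F: "F \<in> borel_measurable borel"
  shows "NI (muA \<mu> a {k}) p F = (\<integral>\<^sup>+ x. ennreal ((x - a k)^2 * \<bar>F x\<bar> powr p) \<partial>\<mu>)"
proof -
  have e: "muA \<mu> a {k} = density \<mu> (\<lambda>x. ennreal ((x - a k)^2))" unfolding muA_def by simp
  have m: "(\<lambda>x. ennreal (\<bar>F x\<bar> powr p)) \<in> borel_measurable \<mu>" using F by (simp add: measurable_cong_sets[OF sm refl])
  have m2: "(\<lambda>x. ennreal ((x - a k)^2)) \<in> borel_measurable \<mu>" by (simp add: measurable_cong_sets[OF sm refl])
  show ?thesis unfolding NI_def e
    by (subst nn_integral_density[OF m2 m]) (simp add: ennreal_mult)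
qed

lemma NI_Bh:
  assumes sm: "sets \<mu> = sets borel" and F: "F \<in> borel_measurable borel" and p: "p > 0"
  shows "NI (muA \<mu> a {k}) p (\<lambda>x. F x * wA a {k} p x) = NI \<mu> p (\<lambda>x. F x * (x - a k))"
proof -
  have Fm: "(\<lambda>x. F x * wA a {k} p x) \<in> borel_measurable borel" using F unfolding wk by measurable
  have "(x - a k)^2 * \<bar>F x * wA a {k} p x\<bar> powr p = \<bar>F x * (x - a k)\<bar> powr p" for x
  proof (cases "x = a k")
    case True then show ?thesis by (simp add: wk)
  next
    case False
    then have t: "\<bar>x - a k\<bar> > 0" by simp
    have "(x - a k)^2 = \<bar>x - a k\<bar> powr 2" using t by (simp add: powr_numeral)
    moreover have "\<bar>F x * wA a {k} p x\<bar> = \<bar>F x\<bar> * \<bar>x - a k\<bar> powr (1 - 2/p)" by (simp add: wk abs_mult)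
    moreover have "\<bar>F x * (x - a k)\<bar> = \<bar>F x\<bar> * \<bar>x - a k\<bar>" by (simp add: abs_mult)
    ultimately show ?thesis using pw1[OF t p, of "\<bar>F x\<bar>"] by simp
  qed
  then show ?thesis by (subst NI_mub[OF sm Fm]) (simp add: NI_def)
qed

lemma NI_f':
  assumes sm: "sets \<mu> = sets borel" and f: "f \<in> borel_measurable borel" and p: "p > 0"
    and z: "emeasure \<mu> {a k} = 0"
  shows "NI (muA \<mu> a {k}) p (\<lambda>y. f y * wA a {k} p y / (y - a k)) = NI \<mu> p f"
proof -
  have Fm: "(\<lambda>y. f y * wA a {k} p y / (y - a k)) \<in> borel_measurable borel" using f unfolding wk by measurable
  have AE: "AE x in \<mu>. x \<noteq> a k"
    by (rule AE_I'[of "{a k}"]) (use z sm in \<open>auto simp: null_sets_def\<close>)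
  have "(x - a k)^2 * \<bar>f x * wA a {k} p x / (x - a k)\<bar> powr p = \<bar>f x\<bar> powr p" if "x \<noteq> a k" for x
  proof -
    have t: "\<bar>x - a k\<bar> > 0" using that by simp
    have "(x - a k)^2 = \<bar>x - a k\<bar> powr 2" using t by (simp add: powr_numeral)
    moreover have "\<bar>f x * wA a {k} p x / (x - a k)\<bar> = \<bar>f x\<bar> * \<bar>x - a k\<bar> powr (1 - 2/p) / \<bar>x - a k\<bar>"
      by (simp add: wk abs_mult)
    ultimately show ?thesis using pw2[OF t p, of "\<bar>f x\<bar>"] by (simp only:)
  qed
  then show ?thesis
    by (subst NI_mub[OF sm Fm], unfold NI_def, intro nn_integral_cong_AE) (use AE in auto)
qed



definition Hyp :: "real measure \<Rightarrow> (nat \<Rightarrow> real) \<Rightarrow> real \<Rightarrow> (real \<Rightarrow> real) \<Rightarrow> (real \<Rightarrow> real) \<Rightarrow> nat set \<Rightarrow> bool" where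
  "Hyp \<mu> a p u v A \<longleftrightarrow> (\<exists>C::real. \<forall>n f. in_Lp (muA \<mu> a A) p f \<longrightarrow>
       (\<forall>x. integrable (muA \<mu> a A)
              (\<lambda>y. opkernel (muA \<mu> a A) n x y * (f y / (v y * wA a A p y)))) \<and>
       Lp_norm (muA \<mu> a A) p
         (\<lambda>x. u x * wA a A p x * S_opA \<mu> a A n (\<lambda>y. f y / (v y * wA a A p y)) x)
       \<le> ennreal C * Lp_norm (muA \<mu> a A) p f)"

definition Concl :: "real measure \<Rightarrow> (nat \<Rightarrow> real) \<Rightarrow> (nat \<Rightarrow> real) \<Rightarrow> nat \<Rightarrow> real \<Rightarrow> (real \<Rightarrow> real) \<Rightarrow> (real \<Rightarrow> real) \<Rightarrow> bool" where
  "Concl \<mu> a M k p u v \<longleftrightarrow> (\<exists>C::real. \<forall>n f. in_Lp \<mu> p f \<longrightarrow>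
       (\<forall>x. integrable \<mu> (\<lambda>y. opkernel (nu_measure \<mu> a M k) n x y * (f y / v y))) \<and>
       Lp_norm \<mu> p (\<lambda>x. u x * T_op \<mu> a M k n (\<lambda>y. f y / v y) x)
       \<le> ennreal C * Lp_norm \<mu> p f)"

lemma comb:
  fixes lam p w A B :: real
  assumes l: "0 \<le> lam" "lam \<le> 1" and p: "p > 0"
  shows "\<bar>w * (lam * A + (1 - lam) * B)\<bar> powr p \<le> \<bar>w * A\<bar> powr p + \<bar>w * B\<bar> powr p"
proof -
  define m where "m = max \<bar>w * A\<bar> \<bar>w * B\<bar>"
  have "\<bar>w * (lam * A + (1 - lam) * B)\<bar> = \<bar>lam * (w * A) + (1 - lam) * (w * B)\<bar>" by (simp add: algebra_simps)
  also have "\<dots> \<le> lam * \<bar>w * A\<bar> + (1 - lam) * \<bar>w * B\<bar>"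
    using l by (metis abs_mult abs_of_nonneg abs_triangle_ineq diff_ge_0_iff_ge)
  also have "\<dots> \<le> lam * m + (1 - lam) * m"
    using l by (intro add_mono mult_left_mono) (auto simp: m_def)
  finally have a: "\<bar>w * (lam * A + (1 - lam) * B)\<bar> \<le> m" by (simp add: algebra_simps)
  have "\<bar>w * (lam * A + (1 - lam) * B)\<bar> powr p \<le> m powr p" using a p by (intro powr_mono2) auto
  also have "m powr p \<le> \<bar>w * A\<bar> powr p + \<bar>w * B\<bar> powr p" by (auto simp: m_def max_def)
  finally show ?thesis .
qed

lemma in_Lp_NI: "in_Lp N p f \<Longrightarrow> NI N p f < \<infinity>"
  unfolding in_Lp_def NI_def by simp

lemma base:
  assumes sm: "sets \<mu> = sets borel" and H: "Hyp \<mu> a p u v {}"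
  shows "Concl \<mu> a M 0 p u v"
  using H unfolding Hyp_def Concl_def muA_empty wA_empty nu0[OF sm] S_opA_def T_op_def
  by simp

lemma mom_g:
  assumes gm: "good \<mu>" and H: "Hyp \<mu> a p u v {}" and f: "in_Lp \<mu> p f"
  shows "mom \<mu> (\<lambda>y. f y / v y)"
proof (rule mom_from_kernel[OF gm])
  obtain C where C: "\<forall>n f. in_Lp \<mu> p f \<longrightarrow>
       (\<forall>x. integrable \<mu> (\<lambda>y. opkernel \<mu> n x y * (f y / v y))) \<and>
       Lp_norm \<mu> p (\<lambda>x. u x * S_opA \<mu> a {} n (\<lambda>y. f y / v y) x) \<le> ennreal C * Lp_norm \<mu> p f"
    using H unfolding Hyp_def muA_empty wA_empty by auto
  fix n x show "integrable \<mu> (\<lambda>y. opkernel \<mu> n x y * (f y / v y))" using C f by blast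
qed



lemma step:
  fixes \<mu> :: "real measure" and a M :: "nat \<Rightarrow> real" and k :: nat and p :: real and u v :: "real \<Rightarrow> real"
  assumes gm: "good \<mu>" and null: "\<And>i. i < Suc k \<Longrightarrow> emeasure \<mu> {a i} = 0"
    and M: "\<And>i. i < Suc k \<Longrightarrow> M i \<ge> 0" and p1: "1 < p"
    and um: "u \<in> borel_measurable borel" and vm: "v \<in> borel_measurable borel"
    and H0: "Hyp \<mu> a p u v {}"
    and IH1: "Concl \<mu> a M k p u v"
    and IH2: "Concl (muA \<mu> a {k}) a (\<lambda>i. M i * (a i - a k)^2) k p (\<lambda>x. u x * wA a {k} p x) (\<lambda>x. v x * wA a {k} p x)"
  shows "Concl \<mu> a M (Suc k) p u v"
proof -
  have p: "p > 0" using p1 by simp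
  have sm: "sets \<mu> = sets borel" using gm by (simp add: good_def)
  define \<mu>' where "\<mu>' = muA \<mu> a {k}"
  define M' where "M' = (\<lambda>i. M i * (a i - a k)^2)"
  define u' where "u' = (\<lambda>x. u x * wA a {k} p x)"
  define v' where "v' = (\<lambda>x. v x * wA a {k} p x)"
  define \<rho> where "\<rho> = nu_measure \<mu> a M k"
  define \<rho>' where "\<rho>' = nu_measure \<mu>' a M' k"
  have Mk: "\<And>i. i < k \<Longrightarrow> M i \<ge> 0" using M by simp
  have grho: "good \<rho>" unfolding \<rho>_def by (rule good_nu[OF gm Mk])
  obtain C1 where C1: "\<And>n f. in_Lp \<mu> p f \<Longrightarrow>
       Lp_norm \<mu> p (\<lambda>x. u x * T_op \<mu> a M k n (\<lambda>y. f y / v y) x) \<le> ennreal C1 * Lp_norm \<mu> p f"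
    using IH1 unfolding Concl_def by blast
  obtain C2 where C2: "\<And>n f. in_Lp \<mu>' p f \<Longrightarrow>
       Lp_norm \<mu>' p (\<lambda>x. u' x * T_op \<mu>' a M' k n (\<lambda>y. f y / v' y) x) \<le> ennreal C2 * Lp_norm \<mu>' p f"
    using IH2 unfolding Concl_def \<mu>'_def M'_def u'_def v'_def by blast
  define c where "c = max C1 0 powr p + max C2 0 powr p"
  have c0: "c \<ge> 0" unfolding c_def by simp
  show ?thesis unfolding Concl_def
  proof (intro exI[of _ "c powr (1/p)"] allI impI conjI)
    fix n f assume fL: "in_Lp \<mu> p f"
    have fm: "f \<in> borel_measurable borel" using fL unfolding in_Lp_def by (simp add: measurable_cong_sets[OF sm refl])
    define g where "g = (\<lambda>y. f y / v y)"
    have gmb: "g \<in> borel_measurable borel" unfolding g_def using fm vm by measurable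
    have mg: "mom \<mu> g" unfolding g_def by (rule mom_g[OF gm H0 fL])
    show "integrable \<mu> (\<lambda>y. opkernel (nu_measure \<mu> a M (Suc k)) n x y * (f y / v y))" for x
      using kernel_int(2)[OF mg] unfolding g_def by blast
    have NIf: "NI \<mu> p f < \<infinity>" by (rule in_Lp_NI[OF fL])
    define g' where "g' = (\<lambda>y. g y / (y - a k))"
    have mg': "mom \<mu>' g'" unfolding \<mu>'_def g'_def by (rule mom_mub[OF sm gmb mg])
    define lam where "lam = 1 / (1 + M k * opkernel \<rho> n (a k) (a k))"
    have K: "opkernel \<rho> n (a k) (a k) > 0" by (rule Kbb_pos[OF good_on[OF grho]])
    have t: "0 \<le> M k * opkernel \<rho> n (a k) (a k)" using K M[of k] by simp
    have lam: "0 \<le> lam" "lam \<le> 1" unfolding lam_def using t by (auto simp: divide_le_eq)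
    define T1 where "T1 = (\<lambda>x. poly (Opoly \<rho> \<mu> n g) x)"
    define T2 where "T2 = (\<lambda>x. poly (Opoly \<rho>' \<mu>' (n - 1) g') x)"
    define Bh where "Bh = (\<lambda>x. if n = 0 then 0 else (x - a k) * T2 x)"
    have T1e: "T_op \<mu> a M k n g x = T1 x" for x
      unfolding T_op_def T1_def Opoly_poly kernel_int(1)[OF mg] \<rho>_def ..
    have T2e: "T_op \<mu>' a M' k (n - 1) g' x = T2 x" for x
      unfolding T_op_def T2_def Opoly_poly kernel_int(1)[OF mg'] \<rho>'_def ..
    have Tnu: "T_op \<mu> a M (Suc k) n g x = lam * T1 x + (1 - lam) * Bh x" for x
    proof -
      have "T_op \<mu> a M (Suc k) n g x = Op (nu_measure \<mu> a M (Suc k)) \<mu> n g x"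
        unfolding T_op_def kernel_int(1)[OF mg] ..
      also have "\<dots> = lam * Op \<rho> \<mu> n g x + (1 - lam) * (if n = 0 then 0 else (x - a k) * Op \<rho>' \<mu>' (n - 1) g' x)"
        unfolding lam_def \<rho>_def \<rho>'_def \<mu>'_def M'_def g'_def by (rule step_identity[OF gm M gmb mg])
      finally show ?thesis unfolding T1_def T2_def Bh_def Opoly_poly .
    qed
    have mT1: "(\<lambda>x. u x * T1 x) \<in> borel_measurable borel" unfolding T1_def using um by measurable
    have mBh: "(\<lambda>x. u x * Bh x) \<in> borel_measurable borel" unfolding Bh_def T2_def using um by measurable
    have b1: "NI \<mu> p (\<lambda>x. u x * T1 x) \<le> ennreal (max C1 0 powr p) * NI \<mu> p f"
    proof (rule L1[OF _ NIf p])
      show "Lp_norm \<mu> p (\<lambda>x. u x * T1 x) \<le> ennreal C1 * Lp_norm \<mu> p f"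
        using C1[OF fL, of n] unfolding g_def[symmetric] T1e .
    qed
    have b2: "NI \<mu> p (\<lambda>x. u x * Bh x) \<le> ennreal (max C2 0 powr p) * NI \<mu> p f"
    proof (cases "n = 0")
      case True
      then have "NI \<mu> p (\<lambda>x. u x * Bh x) = 0" unfolding Bh_def NI_def using p by simp
      then show ?thesis by simp
    next
      case False
      define f' where "f' = (\<lambda>y. f y * wA a {k} p y / (y - a k))"
      have f'm: "f' \<in> borel_measurable borel" unfolding f'_def wk using fm by measurable
      have NIf': "NI \<mu>' p f' = NI \<mu> p f" unfolding \<mu>'_def f'_def
        using NI_f'[OF sm fm p, of a k] null[of k] by simp
      have smu': "sets \<mu>' = sets borel" by (simp add: \<mu>'_def sm)
      have f'L: "in_Lp \<mu>' p f'" unfolding in_Lp_def using f'm NIf NIf'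
        by (simp add: measurable_cong_sets[OF smu' refl] NI_def)
      have fv: "(\<lambda>y. f' y / v' y) = g'"
      proof
        fix y show "f' y / v' y = g' y"
        proof (cases "y = a k")
          case True then show ?thesis by (simp add: f'_def g'_def)
        next
          case False
          then have w: "wA a {k} p y > 0" by (simp add: wk)
          show ?thesis
          proof (cases "v y = 0")
            case True then show ?thesis by (simp add: f'_def g'_def v'_def g_def)
          next
            case False
            then show ?thesis using w \<open>y \<noteq> a k\<close> by (simp add: f'_def g'_def v'_def g_def field_simps)
          qed
        qed
      qed
      have "Lp_norm \<mu>' p (\<lambda>x. u' x * T2 x) \<le> ennreal C2 * Lp_norm \<mu>' p f'"
        using C2[OF f'L, of "n - 1"] unfolding fv T2e .
      then have "NI \<mu>' p (\<lambda>x. u' x * T2 x) \<le> ennreal (max C2 0 powr p) * NI \<mu>' p f'"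
        by (rule L1) (use NIf NIf' p in auto)
      moreover have "NI \<mu>' p (\<lambda>x. u' x * T2 x) = NI \<mu> p (\<lambda>x. u x * Bh x)"
      proof -
        have "(\<lambda>x. u' x * T2 x) = (\<lambda>x. (u x * T2 x) * wA a {k} p x)" unfolding u'_def by (simp add: mult_ac)
        moreover have "(\<lambda>x. u x * Bh x) = (\<lambda>x. (u x * T2 x) * (x - a k))" unfolding Bh_def using False by (simp add: mult_ac)
        moreover have "(\<lambda>x. u x * T2 x) \<in> borel_measurable borel" unfolding T2_def using um by measurable
        ultimately show ?thesis unfolding \<mu>'_def using NI_Bh[OF sm _ p] by simp
      qed
      ultimately show ?thesis using NIf' by simp
    qed
    have "NI \<mu> p (\<lambda>x. u x * T_op \<mu> a M (Suc k) n g x)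
        \<le> (\<integral>\<^sup>+ x. ennreal (\<bar>u x * T1 x\<bar> powr p) + ennreal (\<bar>u x * Bh x\<bar> powr p) \<partial>\<mu>)"
      unfolding NI_def Tnu
      by (intro nn_integral_mono) (simp add: ennreal_plus[symmetric] comb[OF lam p] del: ennreal_plus)
    also have "\<dots> = NI \<mu> p (\<lambda>x. u x * T1 x) + NI \<mu> p (\<lambda>x. u x * Bh x)"
      unfolding NI_def using mT1 mBh
      by (intro nn_integral_add) (auto simp: measurable_cong_sets[OF sm refl])
    also have "\<dots> \<le> ennreal (max C1 0 powr p) * NI \<mu> p f + ennreal (max C2 0 powr p) * NI \<mu> p f"
      using b1 b2 by (rule add_mono)
    also have "\<dots> = ennreal c * NI \<mu> p f" unfolding c_def
      by (simp add: ennreal_plus distrib_right)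
    finally have "NI \<mu> p (\<lambda>x. u x * T_op \<mu> a M (Suc k) n g x) \<le> ennreal c * NI \<mu> p f" .
    from L2[OF this NIf p c0]
    show "Lp_norm \<mu> p (\<lambda>x. u x * T_op \<mu> a M (Suc k) n (\<lambda>y. f y / v y) x) \<le> ennreal (c powr (1 / p)) * Lp_norm \<mu> p f"
      unfolding g_def .
  qed
qed



lemma Hyp_insert:
  assumes sm: "sets \<mu> = sets borel" and fin: "finite A" and k: "k \<notin> A"
    and H: "Hyp \<mu> a p u v (insert k A)"
  shows "Hyp (muA \<mu> a {k}) a p (\<lambda>x. u x * wA a {k} p x) (\<lambda>x. v x * wA a {k} p x) A"
proof -
  have e1: "\<And>x. u x * wA a {k} p x * wA a A p x = u x * wA a (insert k A) p x"
    by (simp add: wA_insert[OF fin k, symmetric] mult.assoc)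
  have e2: "\<And>x. v x * wA a {k} p x * wA a A p x = v x * wA a (insert k A) p x"
    by (simp add: wA_insert[OF fin k, symmetric] mult.assoc)
  show ?thesis using H unfolding Hyp_def S_opA_def
    by (simp only: e1 e2 muA_insert[OF sm fin k])
qed

lemma G:
  fixes a :: "nat \<Rightarrow> real" and p :: real
  shows "\<And>\<mu> M u v. good \<mu> \<Longrightarrow> (\<And>i. i < k \<Longrightarrow> emeasure \<mu> {a i} = 0) \<Longrightarrow> (\<And>i. i < k \<Longrightarrow> M i \<ge> 0)
    \<Longrightarrow> 1 < p \<Longrightarrow> u \<in> borel_measurable borel \<Longrightarrow> v \<in> borel_measurable borel
    \<Longrightarrow> (\<And>A. A \<subseteq> {..<k} \<Longrightarrow> Hyp \<mu> a p u v A) \<Longrightarrow> Concl \<mu> a M k p u v"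
proof (induct k)
  case 0
  show ?case by (rule base) (use 0 in \<open>auto simp: good_def\<close>)
next
  case (Suc k)
  note gm = Suc.prems(1)
  have sm: "sets \<mu> = sets borel" using gm by (simp add: good_def)
  show ?case
  proof (rule step[OF gm Suc.prems(2,3,4,5,6)])
    show "Hyp \<mu> a p u v {}" using Suc.prems(7) by simp
    have Hk: "Hyp \<mu> a p u v A" if "A \<subseteq> {..<k}" for A
    proof -
      have "A \<subseteq> {..<Suc k}" using that by auto
      then show ?thesis by (rule Suc.prems(7))
    qed
    show "Concl \<mu> a M k p u v"
      by (rule Suc.hyps[OF gm _ _ _ _ _ Hk]) (use Suc.prems in auto)
    show "Concl (muA \<mu> a {k}) a (\<lambda>i. M i * (a i - a k)^2) k p (\<lambda>x. u x * wA a {k} p x) (\<lambda>x. v x * wA a {k} p x)"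
    proof (rule Suc.hyps)
      show "good (muA \<mu> a {k})" by (rule good_mub[OF gm])
      show "emeasure (muA \<mu> a {k}) {a i} = 0" if "i < k" for i
        by (rule null_mub[OF sm]) (use Suc.prems(2) that in simp)
      show "M i * (a i - a k)^2 \<ge> 0" if "i < k" for i using Suc.prems(3) that by simp
      show "1 < p" by fact
      show "(\<lambda>x. u x * wA a {k} p x) \<in> borel_measurable borel" unfolding wk using Suc.prems(5) by measurable
      show "(\<lambda>x. v x * wA a {k} p x) \<in> borel_measurable borel" unfolding wk using Suc.prems(6) by measurable
      show "Hyp (muA \<mu> a {k}) a p (\<lambda>x. u x * wA a {k} p x) (\<lambda>x. v x * wA a {k} p x) A"
        if "A \<subseteq> {..<k}" for A
      proof (rule Hyp_insert[OF sm])
        show "finite A" using that finite_subset by blast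
        show "k \<notin> A" using that by auto
        have "insert k A \<subseteq> {..<Suc k}" using that by auto
        then show "Hyp \<mu> a p u v (insert k A)" by (rule Suc.prems(7))
      qed
    qed
  qed
qed

theorem lemma4:
  fixes \<mu> :: "real measure" and a M :: "nat \<Rightarrow> real" and k :: nat
    and p :: real and u v :: "real \<Rightarrow> real"
  assumes sets_mu: "sets \<mu> = sets borel"
    and incr: "infinite {x. point_of_increase \<mu> x}"
    and moments: "\<And>j. integrable \<mu> (\<lambda>x. x ^ j)"
    and distinct: "inj_on a {..<k}"
    and null: "\<And>i. i < k \<Longrightarrow> emeasure \<mu> {a i} = 0"
    and Mpos: "\<And>i. i < k \<Longrightarrow> M i > 0"
    and p: "1 < p"
    and u_meas: "u \<in> borel_measurable borel" and u_nonneg: "\<And>x. u x \<ge> 0"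
    and v_meas: "v \<in> borel_measurable borel" and v_nonneg: "\<And>x. v x \<ge> 0"
    and hyp: "\<And>A. A \<subseteq> {..<k} \<Longrightarrow> \<exists>C::real. \<forall>n f. in_Lp (muA \<mu> a A) p f \<longrightarrow>
       (\<forall>x. integrable (muA \<mu> a A)
              (\<lambda>y. opkernel (muA \<mu> a A) n x y * (f y / (v y * wA a A p y)))) \<and>
       Lp_norm (muA \<mu> a A) p
         (\<lambda>x. u x * wA a A p x * S_opA \<mu> a A n (\<lambda>y. f y / (v y * wA a A p y)) x)
       \<le> ennreal C * Lp_norm (muA \<mu> a A) p f"
  shows "\<exists>C::real. \<forall>n f. in_Lp \<mu> p f \<longrightarrow>
       (\<forall>x. integrable \<mu> (\<lambda>y. opkernel (nu_measure \<mu> a M k) n x y * (f y / v y))) \<and>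
       Lp_norm \<mu> p (\<lambda>x. u x * T_op \<mu> a M k n (\<lambda>y. f y / v y) x)
       \<le> ennreal C * Lp_norm \<mu> p f"
proof -
  have m1: "mom \<mu> (\<lambda>_. 1)" unfolding mom_def using moments by simp
  have gm: "good \<mu>" unfolding good_def using sets_mu m1 posdef_incr[OF sets_mu m1 incr] by simp
  have "Concl \<mu> a M k p u v"
  proof (rule G[OF gm null _ p u_meas v_meas])
    show "M i \<ge> 0" if "i < k" for i using Mpos[OF that] by simp
    show "Hyp \<mu> a p u v A" if "A \<subseteq> {..<k}" for A unfolding Hyp_def using hyp[OF that] .
  qed
  then show ?thesis unfolding Concl_def .
qed

end
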